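(* Let $\Gamma$ be a cubic ($3$-regular) finite connected undirected graph with girth $g(\Gamma)\ge5$, and let $(u_{ij})$ be the generators of $C(G_{aut}^+(\Gamma))$. Then $u_{ij}u_{kl}=u_{kl}u_{ij}$ for all vertices $i,j,k,l$ with $d(i,k)=2=d(j,l)$.
   Context: $d$ is the graph distance; the girth is the length of a shortest cycle. For a finite simple undirected graph $\Gamma=(V,E)$ with $V=\{1,\dots,n\}$, $C(G_{aut}^+(\Gamma))$ is the universal unital $C^*$-algebra generated by $u_{ij}$, $1\le i,j\le n$, with relations: (R1) $u_{ij}=u_{ij}^*=u_{ij}^2$; (R2) $\sum_{l} u_{il}=1=\sum_{l} u_{li}$ for all $i$; (R3) $u_{ij}u_{kl}=u_{kl}u_{ij}=0$ whenever exactly one of $(i,k)\in E$, $(j,l)\in E$ holds. *)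

theory Defs
  imports "HOL-Analysis.Analysis" "HOL-Library.Extended_Nat"
begin

text \<open>A unital complex C*-algebra: a unital real Banach algebra, equipped with
  multiplication by the imaginary unit (making it a complex Banach algebra) and an
  antilinear anti-multiplicative involution satisfying the C*-identity.\<close>

class cstar_algebra = real_normed_algebra_1 + banach +
  fixes cstar :: "'a \<Rightarrow> 'a"
    and imult :: "'a \<Rightarrow> 'a"
  assumes imult_imult: "imult (imult x) = - x"
    and imult_add: "imult (x + y) = imult x + imult y"
    and imult_scaleR: "imult (scaleR r x) = scaleR r (imult x)"
    and imult_mult_left: "imult (x * y) = imult x * y"
    and imult_mult_right: "imult (x * y) = x * imult y"
    and norm_imult: "norm (imult x) = norm x"
    and cstar_cstar: "cstar (cstar x) = x"
    and cstar_add: "cstar (x + y) = cstar x + cstar y"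
    and cstar_scaleR: "cstar (scaleR r x) = scaleR r (cstar x)"
    and cstar_imult: "cstar (imult x) = - imult (cstar x)"
    and cstar_mult: "cstar (x * y) = cstar y * cstar x"
    and cstar_identity: "norm (cstar x * x) = (norm x)^2"

definition qaut_rels ::
  "nat \<Rightarrow> (nat \<Rightarrow> nat \<Rightarrow> bool) \<Rightarrow> (nat \<Rightarrow> nat \<Rightarrow> 'a::cstar_algebra) \<Rightarrow> bool" where
  "qaut_rels n E u \<longleftrightarrow>
     (\<forall>i\<in>{1..n}. \<forall>j\<in>{1..n}. u i j = cstar (u i j) \<and> u i j = u i j * u i j) \<and>
     (\<forall>i\<in>{1..n}. (\<Sum>l\<in>{1..n}. u i l) = 1 \<and> (\<Sum>l\<in>{1..n}. u l i) = 1) \<and>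
     (\<forall>i\<in>{1..n}. \<forall>j\<in>{1..n}. \<forall>k\<in>{1..n}. \<forall>l\<in>{1..n}.
        (E i k \<noteq> E j l) \<longrightarrow> u i j * u k l = 0 \<and> u k l * u i j = 0)"

definition simple_graph :: "nat \<Rightarrow> (nat \<Rightarrow> nat \<Rightarrow> bool) \<Rightarrow> bool" where
  "simple_graph n E \<longleftrightarrow>
     (\<forall>i j. E i j \<longrightarrow> i \<in> {1..n} \<and> j \<in> {1..n}) \<and>
     (\<forall>i j. E i j \<longrightarrow> E j i) \<and> (\<forall>i. \<not> E i i)"

definition is_walk :: "nat \<Rightarrow> (nat \<Rightarrow> nat \<Rightarrow> bool) \<Rightarrow> nat list \<Rightarrow> bool" where
  "is_walk n E p \<longleftrightarrow> p \<noteq> [] \<and> set p \<subseteq> {1..n} \<and>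
     (\<forall>m. Suc m < length p \<longrightarrow> E (p ! m) (p ! Suc m))"

text \<open>Graph distance (number of edges of a shortest walk; \<infinity> if none).\<close>
definition gdist :: "nat \<Rightarrow> (nat \<Rightarrow> nat \<Rightarrow> bool) \<Rightarrow> nat \<Rightarrow> nat \<Rightarrow> enat" where
  "gdist n E i k = (INF p \<in> {p. is_walk n E p \<and> hd p = i \<and> last p = k}. enat (length p - 1))"

definition connected_graph :: "nat \<Rightarrow> (nat \<Rightarrow> nat \<Rightarrow> bool) \<Rightarrow> bool" where
  "connected_graph n E \<longleftrightarrow>
     (\<forall>i\<in>{1..n}. \<forall>k\<in>{1..n}. \<exists>p. is_walk n E p \<and> hd p = i \<and> last p = k)"

definition cubic :: "nat \<Rightarrow> (nat \<Rightarrow> nat \<Rightarrow> bool) \<Rightarrow> bool" where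
  "cubic n E \<longleftrightarrow> (\<forall>i\<in>{1..n}. card {j\<in>{1..n}. E i j} = 3)"

text \<open>A cycle: list of at least 3 distinct vertices, consecutive ones adjacent and the
  last adjacent to the first. Its length is the number of vertices (= number of edges).\<close>
definition is_cycle :: "nat \<Rightarrow> (nat \<Rightarrow> nat \<Rightarrow> bool) \<Rightarrow> nat list \<Rightarrow> bool" where
  "is_cycle n E c \<longleftrightarrow> length c \<ge> 3 \<and> distinct c \<and> is_walk n E c \<and> E (last c) (hd c)"

definition girth :: "nat \<Rightarrow> (nat \<Rightarrow> nat \<Rightarrow> bool) \<Rightarrow> enat" where
  "girth n E = (INF c \<in> {c. is_cycle n E c}. enat (length c))"

end

theory Submission imports Defs begin

locale qg =
  fixes n :: nat and E :: "nat \<Rightarrow> nat \<Rightarrow> bool" and u :: "nat \<Rightarrow> nat \<Rightarrow> 'a::cstar_algebra"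
  assumes sg: "simple_graph n E" and cub: "cubic n E" and gir: "girth n E \<ge> 5"
    and rel: "qaut_rels n E u"
begin

lemma edgeV: "E x y \<Longrightarrow> x \<in> {1..n} \<and> y \<in> {1..n}"
  using sg unfolding simple_graph_def by blast
lemma esym: "E x y \<Longrightarrow> E y x"
  using sg unfolding simple_graph_def by blast
lemma irr: "\<not> E x x"
  using sg unfolding simple_graph_def by blast

lemma cyc5: assumes "is_cycle n E c" shows "5 \<le> length c"
proof -
  have "girth n E \<le> enat (length c)" unfolding girth_def
    by (rule INF_lower) (use assms in simp)
  with gir have "(5::enat) \<le> enat (length c)" by order
  thus ?thesis by (simp add: numeral_eq_enat)
qed

lemma no_tri: assumes "E a b" "E b c" shows "\<not> E c a"
proof
  assume ca: "E c a"
  have "is_cycle n E [a,b,c]"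
    unfolding is_cycle_def is_walk_def
  proof (intro conjI allI impI)
    show "distinct [a,b,c]" using assms ca irr by auto
    show "set [a,b,c] \<subseteq> {1..n}" using assms edgeV by auto
    fix m assume "Suc m < length [a,b,c]"
    hence "m = 0 \<or> m = 1" by auto
    thus "E ([a,b,c] ! m) ([a,b,c] ! Suc m)" using assms by auto
  qed (use ca in auto)
  from cyc5[OF this] show False by simp
qed

lemma no_sq: assumes "E a p" "E p s" "E a p'" "E p' s" "a \<noteq> s" shows "p = p'"
proof (rule ccontr)
  assume ne: "p \<noteq> p'"
  have "is_cycle n E [a,p,s,p']"
    unfolding is_cycle_def is_walk_def
  proof (intro conjI allI impI)
    show "distinct [a,p,s,p']" using assms ne irr by auto
    show "set [a,p,s,p'] \<subseteq> {1..n}" using assms edgeV by auto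
    fix m assume "Suc m < length [a,p,s,p']"
    hence "m = 0 \<or> m = 1 \<or> m = 2" by auto
    thus "E ([a,p,s,p'] ! m) ([a,p,s,p'] ! Suc m)" using assms esym by auto
  qed (use assms esym in auto)
  from cyc5[OF this] show False by simp
qed

lemma z1: "x \<in> {1..n} \<Longrightarrow> y \<in> {1..n} \<Longrightarrow> z \<in> {1..n} \<Longrightarrow> w \<in> {1..n} \<Longrightarrow> E x z \<noteq> E y w \<Longrightarrow> u x y * u z w = 0"
  using rel unfolding qaut_rels_def by blast
lemma idem: "x \<in> {1..n} \<Longrightarrow> y \<in> {1..n} \<Longrightarrow> u x y * u x y = u x y"
  using rel unfolding qaut_rels_def by metis
lemma sa: "x \<in> {1..n} \<Longrightarrow> y \<in> {1..n} \<Longrightarrow> cstar (u x y) = u x y"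
  using rel unfolding qaut_rels_def by metis
lemma rowsum: "x \<in> {1..n} \<Longrightarrow> (\<Sum>l\<in>{1..n}. u x l) = 1"
  using rel unfolding qaut_rels_def by blast
lemma colsum: "x \<in> {1..n} \<Longrightarrow> (\<Sum>l\<in>{1..n}. u l x) = 1"
  using rel unfolding qaut_rels_def by blast

lemma ins_row: "c \<in> {1..n} \<Longrightarrow> A * B = (\<Sum>t\<in>{1..n}. A * u c t * B)"
proof -
  assume c: "c \<in> {1..n}"
  have "A * B = A * (\<Sum>t\<in>{1..n}. u c t) * B" using rowsum[OF c] by simp
  also have "\<dots> = (\<Sum>t\<in>{1..n}. A * u c t * B)" by (simp add: sum_distrib_left sum_distrib_right)
  finally show ?thesis .
qed
lemma ins_col: "c \<in> {1..n} \<Longrightarrow> A * B = (\<Sum>t\<in>{1..n}. A * u t c * B)"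
proof -
  assume c: "c \<in> {1..n}"
  have "A * B = A * (\<Sum>t\<in>{1..n}. u t c) * B" using colsum[OF c] by simp
  also have "\<dots> = (\<Sum>t\<in>{1..n}. A * u t c * B)" by (simp add: sum_distrib_left sum_distrib_right)
  finally show ?thesis .
qed

lemma via: assumes aV: "a \<in> {1..n}" and sV: "s \<in> {1..n}" and "a \<noteq> s" "E a p" "E p s" "b \<in> {1..n}" "E b q"
  shows "u a b * u s b = u a b * u p q * u s b"
proof -
  have qV: "q \<in> {1..n}" using assms edgeV by blast
  have pV: "p \<in> {1..n}" using assms edgeV by blast
  have "u a b * u s b = (\<Sum>r\<in>{1..n}. u a b * u r q * u s b)" by (rule ins_col[OF qV])
  also have "\<dots> = (\<Sum>r\<in>{p}. u a b * u r q * u s b)"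
  proof (rule sum.mono_neutral_right)
    show "\<forall>r\<in>{1..n} - {p}. u a b * u r q * u s b = 0"
    proof
      fix r assume r: "r \<in> {1..n} - {p}"
      show "u a b * u r q * u s b = 0"
      proof (cases "E a r")
        case False
        hence "u a b * u r q = 0" using z1[of a b r q] assms qV r by auto
        thus ?thesis by simp
      next
        case True
        have "\<not> E r s" using no_sq[of a r s p] True assms r by auto
        hence "u r q * u s b = 0" using z1[of r q s b] assms qV r esym by auto
        thus ?thesis by (simp add: mult.assoc)
      qed
    qed
  qed (use pV in auto)
  finally show ?thesis by simp
qed

lemma col_orth: assumes aV: "a \<in> {1..n}" and sV: "s \<in> {1..n}" and as: "a \<noteq> s" and ap: "E a p" and ps: "E p s" and bV: "b \<in> {1..n}"
  shows "u a b * u s b = 0"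
proof -
  let ?x = "u a b * u s b"
  have pV: "p \<in> {1..n}" using assms edgeV by blast
  have c3: "card {t\<in>{1..n}. E b t} = 3" using cub bV unfolding cubic_def by blast
  have "?x = (\<Sum>t\<in>{1..n}. u a b * u p t * u s b)" by (rule ins_row[OF pV])
  also have "\<dots> = (\<Sum>t\<in>{t\<in>{1..n}. E b t}. u a b * u p t * u s b)"
  proof (rule sum.mono_neutral_right)
    show "\<forall>t\<in>{1..n} - {t\<in>{1..n}. E b t}. u a b * u p t * u s b = 0"
    proof
      fix t assume t: "t \<in> {1..n} - {t\<in>{1..n}. E b t}"
      hence "u a b * u p t = 0" using z1[of a b p t] assms pV by auto
      thus "u a b * u p t * u s b = 0" by simp
    qed
  qed auto
  also have "\<dots> = (\<Sum>t\<in>{t\<in>{1..n}. E b t}. ?x)"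
    by (rule sum.cong) (use via[OF aV sV as ap ps bV] in auto)
  also have "\<dots> = of_nat 3 * ?x" using c3 by simp
  finally have e: "?x = of_nat 3 * ?x" .
  have "of_nat 3 * ?x = scaleR (3::real) ?x" by (simp add: scaleR_conv_of_real)
  with e have "scaleR (3::real) ?x = scaleR (1::real) ?x" by simp
  hence "scaleR (3::real) ?x - scaleR 1 ?x = 0" by simp
  hence "scaleR ((3::real) - 1) ?x = 0" by (simp only: scaleR_left_diff_distrib)
  thus ?thesis by simp
qed


lemma transp: "qg n E (\<lambda>x y. u y x)"
proof -
  have "qaut_rels n E (\<lambda>x y. u y x)"
    unfolding qaut_rels_def
  proof (intro conjI ballI impI)
    fix i j assume "i \<in> {1..n}" "j \<in> {1..n}"
    thus "u j i = cstar (u j i)" "u j i = u j i * u j i" using sa idem by auto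
  next
    fix i assume "i \<in> {1..n}"
    thus "(\<Sum>l\<in>{1..n}. u l i) = 1" "(\<Sum>l\<in>{1..n}. u i l) = 1" using rowsum colsum by auto
  next
    fix i j k l assume "i \<in> {1..n}" "j \<in> {1..n}" "k \<in> {1..n}" "l \<in> {1..n}" "E i k \<noteq> E j l"
    thus "u j i * u l k = 0" "u l k * u j i = 0" using rel unfolding qaut_rels_def by blast+
  qed
  thus ?thesis using sg cub gir by (simp add: qg_def)
qed

lemma row_orth: assumes "a \<in> {1..n}" "s \<in> {1..n}" "a \<noteq> s" "E a p" "E p s" "b \<in> {1..n}"
  shows "u b a * u b s = 0"
  using qg.col_orth[OF transp assms] by simp

lemma cs_mult3: "cstar (x * y * z) = cstar z * cstar y * cstar x"
  by (simp add: cstar_mult mult.assoc)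

lemma adj_comm: assumes ap: "E a p" and bq: "E b q" shows "u a b * u p q = u p q * u a b"
proof -
  have aV: "a \<in> {1..n}" and pV: "p \<in> {1..n}" and bV: "b \<in> {1..n}" and qV: "q \<in> {1..n}"
    using assms edgeV by blast+
  have "u a b * u p q = (\<Sum>s\<in>{1..n}. u a b * u p q * u s b)"
    using colsum[OF bV] by (simp add: sum_distrib_left[symmetric])
  also have "\<dots> = (\<Sum>s\<in>{a}. u a b * u p q * u s b)"
  proof (rule sum.mono_neutral_right)
    show "\<forall>s\<in>{1..n} - {a}. u a b * u p q * u s b = 0"
    proof
      fix s assume s: "s \<in> {1..n} - {a}"
      show "u a b * u p q * u s b = 0"
      proof (cases "E p s")
        case False
        hence "u p q * u s b = 0" using z1[of p q s b] pV qV bV s bq esym by auto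
        thus ?thesis by (simp add: mult.assoc)
      next
        case True
        have "u a b * u p q * u s b = u a b * u s b"
          using via[of a s p b q] aV s True ap bV bq by auto
        also have "\<dots> = 0" using col_orth[of a s p b] aV s True ap bV by auto
        finally show ?thesis .
      qed
    qed
  qed (use aV in auto)
  finally have X: "u a b * u p q = u a b * u p q * u a b" by simp
  have "u p q * u a b = cstar (u a b * u p q)" by (simp add: cstar_mult sa[OF pV qV] sa[OF aV bV])
  also have "\<dots> = cstar (u a b * u p q * u a b)" using X by simp
  also have "\<dots> = u a b * u p q * u a b" by (simp add: cs_mult3 sa[OF pV qV] sa[OF aV bV])
  finally show ?thesis using X by simp
qed


lemma three_sum: assumes pV: "p \<in> {1..n}" and jV: "j \<in> {1..n}" and qj: "E q j"
  and N: "{t\<in>{1..n}. E p t} = {i,k,m}" and d: "i \<noteq> k" "i \<noteq> m" "k \<noteq> m"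
  shows "u p q = u p q * u i j + u p q * u k j + u p q * u m j"
proof -
  have qV: "q \<in> {1..n}" using qj edgeV by blast
  have "u p q = u p q * (\<Sum>t\<in>{1..n}. u t j)" using colsum[OF jV] by simp
  also have "\<dots> = (\<Sum>t\<in>{1..n}. u p q * u t j)" by (simp add: sum_distrib_left)
  also have "\<dots> = (\<Sum>t\<in>{t\<in>{1..n}. E p t}. u p q * u t j)"
  proof (rule sum.mono_neutral_right)
    show "\<forall>t\<in>{1..n} - {t\<in>{1..n}. E p t}. u p q * u t j = 0"
      using z1[of p q _ j] pV qV jV qj by auto
  qed auto
  also have "\<dots> = u p q * u i j + u p q * u k j + u p q * u m j"
    unfolding N using d by (simp add: add.assoc)
  finally show ?thesis .
qed

lemma main: assumes iV: "i \<in> {1..n}" and jV: "j \<in> {1..n}" and kV: "k \<in> {1..n}" and lV: "l \<in> {1..n}"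
  and ik: "i \<noteq> k" and ip: "E i p" and pk: "E p k" and jl: "j \<noteq> l" and jq: "E j q" and ql: "E q l"
  shows "u i j * u k l = u k l * u i j"
proof -
  have pV: "p \<in> {1..n}" and qV: "q \<in> {1..n}" using ip jq edgeV by blast+
  define Np where "Np = {t\<in>{1..n}. E p t}"
  have fin: "finite Np" unfolding Np_def by simp
  have c3: "card Np = 3" using cub pV unfolding cubic_def Np_def by blast
  have ikN: "{i,k} \<subseteq> Np" using ip pk iV kV esym unfolding Np_def by auto
  have "card {i,k} = 2" using ik by simp
  hence "Np - {i,k} \<noteq> {}"
  proof -
    assume c2: "card {i,k} = 2"
    show ?thesis
    proof
      assume "Np - {i,k} = {}"
      hence "Np \<subseteq> {i,k}" by blast
      hence "card Np \<le> card {i,k}" by (rule card_mono[rotated]) simp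
      with c3 c2 show False by simp
    qed
  qed
  then obtain m where m: "m \<in> Np" "m \<noteq> i" "m \<noteq> k" by blast
  have "{i,k,m} \<subseteq> Np" using ikN m by auto
  moreover have "card {i,k,m} = 3" using ik m by simp
  ultimately have N: "{t\<in>{1..n}. E p t} = {i,k,m}" unfolding Np_def[symmetric]
    using c3 fin by (metis card_subset_eq)
  have mV: "m \<in> {1..n}" and pm: "E p m" using m unfolding Np_def by auto
  let ?P = "u p q"
  have PP: "?P * ?P = ?P" by (rule idem[OF pV qV])
  have cij: "u i j * ?P = ?P * u i j" using adj_comm[OF ip jq] .
  have ckl: "u k l * ?P = ?P * u k l" using adj_comm[of k p l q] pk ql esym by blast
  have o1: "u k l * u k j = 0" using row_orth[of l j q k] lV jV jl ql jq esym kV by auto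
  have o2: "u i j * u m j = 0" using col_orth[of i m p j] iV mV m ip pm jV by auto
  have o3: "u i j * u i l = 0" using row_orth[of j l q i] jV lV jl jq ql iV by auto
  have o4: "u m l * u m j = 0" using row_orth[of l j q m] lV jV jl ql jq esym mV by auto
  have A: "u i j * u k l = u i j * ?P * u k l"
  proof -
    have "u i j * u k l = (\<Sum>t\<in>{1..n}. u i j * u p t * u k l)" by (rule ins_row[OF pV])
    also have "\<dots> = (\<Sum>t\<in>{q}. u i j * u p t * u k l)"
    proof (rule sum.mono_neutral_right)
      show "\<forall>t\<in>{1..n} - {q}. u i j * u p t * u k l = 0"
      proof
        fix t assume t: "t \<in> {1..n} - {q}"
        show "u i j * u p t * u k l = 0"
        proof (cases "E j t")
          case False
          hence "u i j * u p t = 0" using z1[of i j p t] iV jV pV t ip by auto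
          thus ?thesis by simp
        next
          case True
          have "\<not> E t l" using no_sq[of j t l q] True jq ql jl t by auto
          hence "u p t * u k l = 0" using z1[of p t k l] pV t kV lV pk by auto
          thus ?thesis by (simp add: mult.assoc)
        qed
      qed
    qed (use qV in auto)
    finally show ?thesis by simp
  qed
  let ?X = "u i j * u k l"
  have XP: "?X * ?P = ?X"
  proof -
    have "?X * ?P = u i j * ?P * (u k l * ?P)" using A by (simp add: mult.assoc)
    also have "\<dots> = u i j * (?P * ?P) * u k l" using ckl by (simp add: mult.assoc)
    also have "\<dots> = ?X" using A PP by simp
    finally show ?thesis .
  qed
  have Pkl: "?P * u k l = ?P - ?P * u i l - ?P * u m l"
    using three_sum[OF pV lV ql N ik m(2)[symmetric] m(3)[symmetric]] by (simp add: algebra_simps)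
  have T2: "?X * (?P * u k j) = 0"
  proof -
    have "?X * (?P * u k j) = ?X * u k j" using XP by (simp add: mult.assoc[symmetric])
    also have "\<dots> = u i j * ?P * (u k l * u k j)" using A by (simp add: mult.assoc)
    finally show ?thesis using o1 by simp
  qed
  have T3: "?X * (?P * u m j) = 0"
  proof -
    have "?X * (?P * u m j) = ?X * u m j" using XP by (simp add: mult.assoc[symmetric])
    also have "\<dots> = u i j * (?P * u k l) * u m j" using A by (simp add: mult.assoc)
    also have "\<dots> = u i j * ?P * u m j - u i j * ?P * u i l * u m j - u i j * ?P * (u m l * u m j)"
      unfolding Pkl by (simp add: algebra_simps)
    also have "\<dots> = 0"
    proof -
      have "u i j * ?P * u m j = ?P * (u i j * u m j)" using cij by (simp add: mult.assoc[symmetric])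
      moreover have "u i j * ?P * u i l * u m j = ?P * (u i j * u i l) * u m j" using cij by (simp add: mult.assoc[symmetric])
      ultimately show ?thesis using o2 o3 o4 by simp
    qed
    finally show ?thesis .
  qed
  have "?X = ?X * ?P" using XP by simp
  also have "\<dots> = ?X * (?P * u i j + ?P * u k j + ?P * u m j)"
    using three_sum[OF pV jV esym[OF jq] N ik m(2)[symmetric] m(3)[symmetric]] by simp
  also have "\<dots> = ?X * (?P * u i j) + ?X * (?P * u k j) + ?X * (?P * u m j)"
    by (simp add: distrib_left)
  also have "\<dots> = ?X * (?P * u i j)" using T2 T3 by simp
  also have "\<dots> = u i j * ?P * u k l * ?P * u i j" using A by (simp add: mult.assoc)
  finally have X: "?X = u i j * ?P * u k l * ?P * u i j" .
  have "cstar (u i j * ?P * u k l * ?P * u i j) = u i j * ?P * u k l * ?P * u i j"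
    by (simp add: cstar_mult mult.assoc sa[OF iV jV] sa[OF kV lV] sa[OF pV qV])
  hence sX: "cstar ?X = ?X" using X by simp
  have "cstar ?X = u k l * u i j" by (simp add: cstar_mult sa[OF iV jV] sa[OF kV lV])
  with sX show ?thesis by simp
qed

end

lemma gdist2:
  assumes sg: "simple_graph n E" and xV: "x \<in> {1..n}" and yV: "y \<in> {1..n}"
    and d: "gdist n E x y = 2"
  shows "x \<noteq> y \<and> \<not> E x y \<and> (\<exists>p. E x p \<and> E p y)"
proof -
  let ?S = "{p. is_walk n E p \<and> hd p = x \<and> last p = y}"
  have low: "gdist n E x y \<le> enat (length p - 1)" if "p \<in> ?S" for p
    unfolding gdist_def by (rule INF_lower[OF that])
  have xy: "x \<noteq> y"
  proof
    assume "x = y"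
    hence "[x] \<in> ?S" using xV unfolding is_walk_def by auto
    from low[OF this] d show False by (simp add: zero_enat_def[symmetric])
  qed
  have nE: "\<not> E x y"
  proof
    assume e: "E x y"
    have "[x,y] \<in> ?S" using xV yV e unfolding is_walk_def by (auto simp: less_Suc_eq)
    from low[OF this] d show False by (simp add: one_enat_def[symmetric])
  qed
  have ex: "\<exists>p. E x p \<and> E p y"
  proof (rule ccontr)
    assume no: "\<not> (\<exists>p. E x p \<and> E p y)"
    have "(3::enat) \<le> gdist n E x y" unfolding gdist_def
    proof (rule INF_greatest)
      fix p assume "p \<in> ?S"
      hence w: "is_walk n E p" and h: "hd p = x" and l: "last p = y" by auto
      have ne: "p \<noteq> []" using w unfolding is_walk_def by auto
      have ed: "\<And>m. Suc m < length p \<Longrightarrow> E (p ! m) (p ! Suc m)" using w unfolding is_walk_def by auto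
      have h0: "p ! 0 = x" using h ne by (simp add: hd_conv_nth)
      have l0: "p ! (length p - 1) = y" using l ne by (simp add: last_conv_nth)
      have "length p \<ge> 4"
      proof (rule ccontr)
        assume "\<not> length p \<ge> 4"
        moreover have "length p \<noteq> 0" using ne by simp
        ultimately have "length p = 1 \<or> length p = 2 \<or> length p = 3" by linarith
        thus False
        proof (elim disjE)
          assume "length p = 1" thus False using h0 l0 xy by simp
        next
          assume L: "length p = 2" thus False using h0 l0 ed[of 0] nE by simp
        next
          assume L: "length p = 3" thus False using h0 l0 ed[of 0] ed[of 1] no by (auto simp: numeral_2_eq_2)
        qed
      qed
      hence "length p - 1 \<ge> 3" by simp
      thus "3 \<le> enat (length p - 1)" by (simp add: numeral_eq_enat)
    qed
    with d show False by simp
  qed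
  from xy nE ex show ?thesis by blast
qed

theorem lemma5p2:
  fixes n :: nat and E :: "nat \<Rightarrow> nat \<Rightarrow> bool"
    and u :: "nat \<Rightarrow> nat \<Rightarrow> 'a::cstar_algebra"
  assumes "simple_graph n E"
    and "cubic n E"
    and "connected_graph n E"
    and "girth n E \<ge> 5"
    and "qaut_rels n E u"
    and "i \<in> {1..n}" "j \<in> {1..n}" "k \<in> {1..n}" "l \<in> {1..n}"
    and "gdist n E i k = 2" "gdist n E j l = 2"
  shows "u i j * u k l = u k l * u i j"
proof -
  interpret qg n E u using assms by (simp add: qg_def)
  obtain p where "E i p" "E p k" and "i \<noteq> k" using gdist2[OF assms(1) assms(6) assms(8) assms(10)] by blast
  moreover obtain q where "E j q" "E q l" and "j \<noteq> l" using gdist2[OF assms(1) assms(7) assms(9) assms(11)] by blast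
  ultimately show ?thesis using main assms(6-9) by blast
qed

end
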